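(* Let $T>0$, $0<\eta<T$, $0<\alpha <\frac{2T}{\eta ^{2}}$ and $0\leq \beta < \frac{2T-\alpha \eta ^{2}}{\alpha \eta ^{2}-2\eta +2T}$. If $y\in C([0,T],[0,\infty))$, then the unique solution $u$ of \[ u''(t)+y(t)=0,\ t\in(0,T),\qquad u(0)=\beta u(\eta),\quad u(T)=\alpha\int_0^\eta u(s)\,ds \] satisfies $u(t)\geq 0$ for all $t\in [0,T]$.
   Context: A solution is a function $u\in C^2([0,T])$ satisfying the differential equation on $(0,T)$ and the two boundary conditions; under the stated hypotheses this problem has a unique solution. *)

theory Defs
  imports "HOL-Analysis.Analysis"
begin

definition C2_on_with :: "real \<Rightarrow> real \<Rightarrow> (real \<Rightarrow> real) \<Rightarrow> (real \<Rightarrow> real) \<Rightarrow> (real \<Rightarrow> real) \<Rightarrow> bool" where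
  "C2_on_with a b u u' u'' \<longleftrightarrow>
     (\<forall>t\<in>{a..b}. (u has_real_derivative u' t) (at t within {a..b})) \<and>
     (\<forall>t\<in>{a..b}. (u' has_real_derivative u'' t) (at t within {a..b})) \<and>
     continuous_on {a..b} u''"

end

theory Submission
  imports Defs
begin

theorem lemma2p2:
  fixes T \<eta> \<alpha> \<beta> :: real and y u u' u'' :: "real \<Rightarrow> real"
  assumes "T > 0" and "0 < \<eta>" and "\<eta> < T"
    and "0 < \<alpha>" and "\<alpha> < 2 * T / \<eta>^2"
    and "0 \<le> \<beta>" and "\<beta> < (2 * T - \<alpha> * \<eta>^2) / (\<alpha> * \<eta>^2 - 2 * \<eta> + 2 * T)"
    and "continuous_on {0..T} y" and "\<forall>t\<in>{0..T}. y t \<ge> 0"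
    and "C2_on_with 0 T u u' u''"
    and "\<forall>t\<in>{0<..<T}. u'' t + y t = 0"
    and "u 0 = \<beta> * u \<eta>"
    and "u T = \<alpha> * integral {0..\<eta>} u"
  shows "\<forall>t\<in>{0..T}. u t \<ge> 0"
proof -
  note C = assms(10)[unfolded C2_on_with_def]
  have Dw: "\<And>t. t \<in> {0..T} \<Longrightarrow> (u has_real_derivative u' t) (at t within {0..T})"
    using C by blast
  have Dw2: "\<And>t. t \<in> {0..T} \<Longrightarrow> (u' has_real_derivative u'' t) (at t within {0..T})"
    using C by blast
  have D1: "(u has_real_derivative u' t) (at t)" if "0 < t" "t < T" for t
    using Dw[of t] that at_within_Icc_at[of 0 t T] by auto
  have D2: "(u' has_real_derivative u'' t) (at t)" if "0 < t" "t < T" for t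
    using Dw2[of t] that at_within_Icc_at[of 0 t T] by auto
  have cu: "continuous_on {0..T} u" using DERIV_continuous_on Dw by blast
  have cu': "continuous_on {0..T} u'" using DERIV_continuous_on Dw2 by blast
  have neg: "u'' t \<le> 0" if "0 < t" "t < T" for t
  proof -
    have "u'' t + y t = 0" "y t \<ge> 0" using assms(9,11) that by auto
    then show ?thesis by linarith
  qed
  have mono: "u' s \<le> u' r" if "0 \<le> r" "r \<le> s" "s \<le> T" for r s
  proof (rule DERIV_nonpos_imp_decreasing_open[OF that(2)])
    show "\<exists>y. DERIV u' x :> y \<and> y \<le> 0" if "r < x" "x < s" for x
      using D2 neg that \<open>0 \<le> r\<close> \<open>s \<le> T\<close> by (meson le_less_trans less_le_trans)
    show "continuous_on {r..s} u'"
      using cu' by (rule continuous_on_subset) (use that in auto)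
  qed
  have mvt: "\<exists>z. r < z \<and> z < s \<and> u s - u r = (s - r) * u' z" if "0 \<le> r" "r < s" "s \<le> T" for r s
  proof -
    have "\<exists>l z. r < z \<and> z < s \<and> DERIV u z :> l \<and> u s - u r = (s - r) * l"
    proof (rule MVT[OF that(2)])
      show "continuous_on {r..s} u"
        using cu by (rule continuous_on_subset) (use that in auto)
      show "u differentiable (at x)" if "r < x" "x < s" for x
        using D1[of x] that \<open>0 \<le> r\<close> \<open>s \<le> T\<close> real_differentiable_def by force
    qed
    then obtain l z where "r < z" "z < s" "DERIV u z :> l" "u s - u r = (s - r) * l" by blast
    moreover have "l = u' z" using DERIV_unique[OF \<open>DERIV u z :> l\<close> D1[of z]] that calculation by auto
    ultimately show ?thesis by blast
  qed
  define a where "a = u 0"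
  define b where "b = u T"
  have lin: "u t * T \<ge> a * (T - t) + b * t" if "0 \<le> t" "t \<le> T" for t
  proof (cases "t = 0 \<or> t = T")
    case True then show ?thesis unfolding a_def b_def by (auto simp: algebra_simps)
  next
    case False
    then have t: "0 < t" "t < T" using that by auto
    obtain z1 where z1: "0 < z1" "z1 < t" "u t - u 0 = t * u' z1" using mvt[of 0 t] t by auto
    obtain z2 where z2: "t < z2" "z2 < T" "u T - u t = (T - t) * u' z2" using mvt[of t T] t by auto
    have "u' z2 \<le> u' z1" using mono[of z1 z2] z1 z2 by auto
    have "(u T - u t) * t = (T - t) * t * u' z2" using z2 by simp
    also have "\<dots> \<le> (T - t) * t * u' z1"
      using \<open>u' z2 \<le> u' z1\<close> t by (intro mult_left_mono) auto
    also have "\<dots> = (T - t) * (u t - u 0)" using z1 by simp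
    finally show ?thesis unfolding a_def b_def by (simp add: algebra_simps)
  qed
  define I where "I = integral {0..\<eta>} u"
  have lin_int: "((\<lambda>t. (a * (T - t) + b * t) / T) has_integral
       (a * \<eta> + (b - a) * \<eta>^2 / (2 * T))) {0..\<eta>}"
  proof -
    have "((\<lambda>t. (a * (T - t) + b * t) / T) has_integral
       ((\<lambda>t. a * t + (b - a) * t^2 / (2 * T)) \<eta> - (\<lambda>t. a * t + (b - a) * t^2 / (2 * T)) 0)) {0..\<eta>}"
    proof (rule fundamental_theorem_of_calculus)
      show "0 \<le> \<eta>" using assms(2) by simp
      show "\<And>x. x \<in> {0..\<eta>} \<Longrightarrow> ((\<lambda>t. a * t + (b - a) * t^2 / (2 * T)) has_vector_derivative
             (a * (T - x) + b * x) / T) (at x within {0..\<eta>})"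
        unfolding has_real_derivative_iff_has_vector_derivative[symmetric]
        using assms(1)
        by (auto intro!: derivative_eq_intros simp: field_simps)
    qed
    then show ?thesis by simp
  qed
  have ui: "(u has_integral I) {0..\<eta>}"
    unfolding I_def
    by (rule integrable_integral, rule integrable_continuous_interval,
        rule continuous_on_subset[OF cu]) (use assms(3) in auto)
  have H1: "I \<ge> a * \<eta> + (b - a) * \<eta>^2 / (2 * T)"
  proof (rule has_integral_le[OF lin_int ui])
    fix t assume "t \<in> {0..\<eta>}"
    then have "0 \<le> t" "t \<le> T" using assms(3) by auto
    from lin[OF this] show "(a * (T - t) + b * t) / T \<le> u t"
      using assms(1) by (simp add: divide_le_eq mult.commute)
  qed
  have H2: "b = \<alpha> * I" using assms(13) unfolding b_def I_def by simp
  have H3: "u \<eta> * T \<ge> a * (T - \<eta>) + b * \<eta>" using lin[of \<eta>] assms(2,3) by simp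
  have H4: "a = \<beta> * u \<eta>" using assms(12) a_def by simp
  have pos1: "2 * T - \<alpha> * \<eta>^2 > 0"
    using assms(5) assms(2) by (simp add: field_simps)
  have pos2: "\<alpha> * \<eta>^2 - 2 * \<eta> + 2 * T > 0"
    using assms(2,3,4) by (smt (verit) mult_pos_pos zero_less_power)
  have Hb: "b * (2 * T - \<alpha> * \<eta>^2) \<ge> \<alpha> * a * (2 * T * \<eta> - \<eta>^2)"
  proof -
    have "b \<ge> \<alpha> * (a * \<eta> + (b - a) * \<eta>^2 / (2 * T))"
      using H1 H2 assms(4) by (simp add: mult_left_mono)
    then have "b * (2*T) \<ge> \<alpha> * (a * \<eta> * (2*T) + (b - a) * \<eta>^2)"
      using assms(1) by (simp add: field_simps)
    then show ?thesis by (simp add: algebra_simps)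
  qed
  have Ha: "a * T \<ge> \<beta> * (a * (T - \<eta>) + b * \<eta>)"
  proof -
    have "\<beta> * (a * (T - \<eta>) + b * \<eta>) \<le> \<beta> * (u \<eta> * T)"
      using H3 assms(6) by (rule mult_left_mono)
    then show ?thesis using H4 by (simp add: algebra_simps)
  qed
  have beta': "\<beta> * (\<alpha> * \<eta>^2 - 2 * \<eta> + 2 * T) < 2 * T - \<alpha> * \<eta>^2"
    using assms(7) pos2 by (simp add: field_simps)
  have a0: "a \<ge> 0"
  proof (rule ccontr)
    assume "\<not> a \<ge> 0" then have an: "a < 0" by simp
    have e1: "\<beta> * \<eta> * (b * (2 * T - \<alpha> * \<eta>^2)) \<ge> \<beta> * \<eta> * (\<alpha> * a * (2 * T * \<eta> - \<eta>^2))"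
      using Hb assms(2,6) by (intro mult_left_mono) auto
    have e2: "(2 * T - \<alpha> * \<eta>^2) * (\<beta> * (a * (T - \<eta>) + b * \<eta>)) \<le> (2 * T - \<alpha> * \<eta>^2) * (a * T)"
      using Ha pos1 by (intro mult_left_mono) auto
    have "a * (T * (2 * T - \<alpha> * \<eta>^2) - \<beta> * T * (\<alpha> * \<eta>^2 - 2 * \<eta> + 2 * T)) \<ge> 0"
      using e1 e2 by (simp add: algebra_simps power2_eq_square) 
    moreover have "T * (2 * T - \<alpha> * \<eta>^2) - \<beta> * T * (\<alpha> * \<eta>^2 - 2 * \<eta> + 2 * T) > 0"
    proof -
      have "T * (\<beta> * (\<alpha> * \<eta>^2 - 2 * \<eta> + 2 * T)) < T * (2 * T - \<alpha> * \<eta>^2)"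
        using beta' assms(1) by simp
      then show ?thesis by (simp add: algebra_simps)
    qed
    ultimately show False using an by (simp add: mult_less_0_iff zero_le_mult_iff)
  qed
  have b0: "b \<ge> 0"
  proof -
    have "2 * T * \<eta> - \<eta>^2 > 0" using assms(2,3) by (simp add: power2_eq_square)
    then have "\<alpha> * a * (2 * T * \<eta> - \<eta>^2) \<ge> 0" using a0 assms(4) by simp
    then have "b * (2 * T - \<alpha> * \<eta>^2) \<ge> 0" using Hb by linarith
    then show ?thesis using pos1 by (simp add: zero_le_mult_iff)
  qed
  show ?thesis
  proof
    fix t assume "t \<in> {0..T}"
    then have t: "0 \<le> t" "t \<le> T" by auto
    have "a * (T - t) + b * t \<ge> 0" using a0 b0 t by simp
    then have "u t * T \<ge> 0" using lin[OF t] by linarith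
    then show "u t \<ge> 0" using assms(1) by (simp add: zero_le_mult_iff)
  qed
qed

end
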